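(* Let $A\in\mathbb{R}^{n\times n}$, $B\in\mathbb{R}^{n\times m}$, $0\le\gamma\le1$. Let $(D^*,E^*,d^* )$ be true cost parameters and $(D^\dagger,E^\dagger,d^\dagger)$ falsified cost parameters ($D$'s symmetric positive semidefinite, $E$'s symmetric positive definite, $d$'s in $\mathbb{R}^n$). For each of the two parameter sets, let $P$ be the positive definite solution of $P=D+\gamma A'PA-\gamma^2A'PB(E+\gamma B'PB)^{-1}B'PA$, $K=-\gamma(E+\gamma B'PB)^{-1}B'PA$, $h$ the solution of $h=d+\gamma(A+BK)'h$, and $$k=-\tfrac{\gamma}{2}(E+\gamma B'PB)^{-1}B'h;$$ denote these by $P^*,K^*,h^*,k^*$ for the true parameters and $P^\dagger,K^\dagger,h^\dagger,k^\dagger$ for the falsified ones. Suppose $\|E^\dagger-E^*\|\le\lambda_{\min}(E^* )/2$. Then $$\|k^\dagger-k^*\|\le\Gamma_7\|E^\dagger-E^*\|+\Gamma_8\|P^\dagger-P^*\|+\Gamma_9\|h^\dagger-h^*\|,$$ where $\Gamma_7=\frac{4}{\lambda_{\min}(E^* )}\|k^*\|$, $\Gamma_8=\frac{4\gamma}{\lambda_{\min}(E^* )}\|k^*\|\,\|B\|^2$, and $\Gamma_9=\frac{4\gamma}{\lambda_{\min}(E^* )}\|B\|$.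
   Context: Prime denotes transpose; $\|\cdot\|$ is the Euclidean norm for vectors and spectral norm for matrices; $\lambda_{\min}$ is the smallest eigenvalue. $(K,k)$ characterizes the optimal affine policy $u=Kx+k$ of the discounted LQG problem with dynamics $x_{t+1}=Ax_t+Bu_t+Cw_t$ and stage cost $x'Dx+d'x+r+u'Eu$. *)

theory Defs
  imports "HOL-Analysis.Analysis"
begin

definition spec_norm :: "real^'n^'m \<Rightarrow> real" where
  "spec_norm M = onorm (\<lambda>x. M *v x)"

definition lambda_min :: "real^'n^'n \<Rightarrow> real" where
  "lambda_min M = Min {l. \<exists>v. v \<noteq> 0 \<and> M *v v = l *\<^sub>R v}"

definition sym_mat :: "real^'n^'n \<Rightarrow> bool" where
  "sym_mat M \<longleftrightarrow> transpose M = M"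

definition psd_mat :: "real^'n^'n \<Rightarrow> bool" where
  "psd_mat M \<longleftrightarrow> sym_mat M \<and> (\<forall>x. 0 \<le> x \<bullet> (M *v x))"

definition pd_mat :: "real^'n^'n \<Rightarrow> bool" where
  "pd_mat M \<longleftrightarrow> sym_mat M \<and> (\<forall>x. x \<noteq> 0 \<longrightarrow> 0 < x \<bullet> (M *v x))"

definition Gmat :: "real \<Rightarrow> real^'m^'n \<Rightarrow> real^'m^'m \<Rightarrow> real^'n^'n \<Rightarrow> real^'m^'m" where
  "Gmat \<gamma> B E P = E + \<gamma> *\<^sub>R (transpose B ** P ** B)"

definition riccati :: "real \<Rightarrow> real^'n^'n \<Rightarrow> real^'m^'n \<Rightarrow> real^'n^'n \<Rightarrow> real^'m^'m \<Rightarrow> real^'n^'n \<Rightarrow> bool" where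
  "riccati \<gamma> A B D E P \<longleftrightarrow>
     P = D + \<gamma> *\<^sub>R (transpose A ** P ** A)
         - \<gamma>\<^sup>2 *\<^sub>R (transpose A ** P ** B ** matrix_inv (Gmat \<gamma> B E P) ** transpose B ** P ** A)"

definition gainK :: "real \<Rightarrow> real^'n^'n \<Rightarrow> real^'m^'n \<Rightarrow> real^'m^'m \<Rightarrow> real^'n^'n \<Rightarrow> real^'n^'m" where
  "gainK \<gamma> A B E P = - \<gamma> *\<^sub>R (matrix_inv (Gmat \<gamma> B E P) ** transpose B ** P ** A)"

definition h_eq :: "real \<Rightarrow> real^'n^'n \<Rightarrow> real^'m^'n \<Rightarrow> real^'n^'m \<Rightarrow> real^'n \<Rightarrow> real^'n \<Rightarrow> bool" where
  "h_eq \<gamma> A B K d h \<longleftrightarrow> h = d + \<gamma> *\<^sub>R (transpose (A + B ** K) *v h)"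

definition offset_k :: "real \<Rightarrow> real^'m^'n \<Rightarrow> real^'m^'m \<Rightarrow> real^'n^'n \<Rightarrow> real^'n \<Rightarrow> real^'m" where
  "offset_k \<gamma> B E P h = - (\<gamma> / 2) *\<^sub>R (matrix_inv (Gmat \<gamma> B E P) *v (transpose B *v h))"

end

theory Submission
  imports Defs
begin

lemma adj: fixes M :: "real^'n^'m"
  shows "(transpose M *v x) \<bullet> y = x \<bullet> (M *v y)"
  unfolding inner_vec_def matrix_vector_mult_def transpose_def
  apply (simp add: sum_distrib_left sum_distrib_right)
  apply (subst sum.swap)
  apply (simp add: mult_ac)
  done

lemma sym_adj: assumes "sym_mat M" shows "(M *v x) \<bullet> y = x \<bullet> (M *v y)"
  using adj[of M x y] assms unfolding sym_mat_def by simp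

lemma spec_bound: "norm (M *v x) \<le> spec_norm M * norm x"
  unfolding spec_norm_def by (rule onorm) simp

lemma spec_nonneg: "0 \<le> spec_norm M"
  unfolding spec_norm_def by (rule onorm_pos_le) simp

lemma spec_tbound: fixes M :: "real^'n^'m"
  shows "norm (transpose M *v x) \<le> spec_norm M * norm x"
proof -
  let ?y = "transpose M *v x"
  have "norm ?y ^ 2 = x \<bullet> (M *v ?y)" using adj[of M x ?y] by (simp add: power2_norm_eq_inner)
  also have "\<dots> \<le> norm x * norm (M *v ?y)" by (rule norm_cauchy_schwarz)
  also have "\<dots> \<le> norm x * (spec_norm M * norm ?y)" by (simp add: mult_left_mono spec_bound)
  finally have h: "norm ?y * norm ?y \<le> (spec_norm M * norm x) * norm ?y" by (simp add: power2_eq_square mult_ac)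
  show ?thesis
  proof (cases "norm ?y = 0")
    case True then show ?thesis using spec_nonneg[of M] by simp
  next
    case False then show ?thesis using h by (simp add: mult_le_cancel_right)
  qed
qed

lemma rayleigh: fixes E :: "real^'m^'m" assumes "sym_mat E"
  shows "\<exists>\<mu> v. v \<noteq> 0 \<and> E *v v = \<mu> *\<^sub>R v \<and> (\<forall>x. \<mu> * (x \<bullet> x) \<le> x \<bullet> (E *v x))"
proof -
  have "sphere (0::real^'m) 1 \<noteq> {}"
    by (metis norm_axis_1 mem_sphere_0 empty_iff)
  moreover have "continuous_on (sphere 0 1) (\<lambda>x. x \<bullet> (E *v x))"
    by (intro continuous_intros linear_continuous_on) simp
  ultimately obtain v where v: "v \<in> sphere 0 1" and vmin: "\<And>y. y \<in> sphere 0 1 \<Longrightarrow> v \<bullet> (E *v v) \<le> y \<bullet> (E *v y)"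
    using continuous_attains_inf[of "sphere (0::real^'m) 1" "\<lambda>x. x \<bullet> (E *v x)"] by auto
  define \<mu> where "\<mu> = v \<bullet> (E *v v)"
  have nv: "norm v = 1" using v by simp
  have vv: "v \<bullet> v = 1" using nv by (simp add: norm_eq_1)
  define Q where "Q x = x \<bullet> (E *v x) - \<mu> * (x \<bullet> x)" for x
  have Qge: "Q x \<ge> 0" for x
  proof (cases "x = 0")
    case True then show ?thesis by (simp add: Q_def)
  next
    case False
    let ?u = "(1 / norm x) *\<^sub>R x"
    have "?u \<in> sphere 0 1" using False by simp
    then have "\<mu> \<le> ?u \<bullet> (E *v ?u)" unfolding \<mu>_def by (rule vmin)
    also have "?u \<bullet> (E *v ?u) = (x \<bullet> (E *v x)) / (norm x)^2"
      using False by (simp add: matrix_vector_mult_scaleR power2_eq_square field_simps)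
    finally have "\<mu> * (norm x)^2 \<le> x \<bullet> (E *v x)" using False by (simp add: field_simps)
    then show ?thesis by (simp add: Q_def power2_norm_eq_inner)
  qed
  have Qv: "Q v = 0" using vv by (simp add: Q_def \<mu>_def)
  define w where "w = E *v v - \<mu> *\<^sub>R v"
  have expand: "Q (v + t *\<^sub>R w) = Q v + 2 * t * (w \<bullet> w) + t^2 * Q w" for t
  proof -
    have s: "w \<bullet> (E *v v) = v \<bullet> (E *v w)" using sym_adj[OF assms, of w v] by (simp add: inner_commute)
    have h1: "(v + t *\<^sub>R w) \<bullet> (E *v (v + t *\<^sub>R w)) = v \<bullet> (E *v v) + t * (v \<bullet> (E *v w)) + t * (w \<bullet> (E *v v)) + t^2 * (w \<bullet> (E *v w))"
      by (simp add: matrix_vector_right_distrib matrix_vector_mult_scaleR inner_add_left inner_add_right power2_eq_square algebra_simps)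
    have h2: "(v + t *\<^sub>R w) \<bullet> (v + t *\<^sub>R w) = v \<bullet> v + 2 * t * (w \<bullet> v) + t^2 * (w \<bullet> w)"
      by (simp add: inner_add_left inner_add_right inner_commute[of v w] power2_eq_square algebra_simps)
    have h3: "w \<bullet> w = w \<bullet> (E *v v) - \<mu> * (w \<bullet> v)"
      by (subst (2) w_def) (simp add: inner_diff_right)
    show ?thesis unfolding Q_def h1 h2 s[symmetric] h3
      by (simp add: algebra_simps)
  qed
  have "w = 0"
  proof (rule ccontr)
    assume "w \<noteq> 0"
    then have wp: "w \<bullet> w > 0" by simp
    define t where "t = - (w \<bullet> w) / (Q w + 1)"
    have q1: "Q w + 1 > 0" using Qge[of w] by simp
    have "0 \<le> Q (v + t *\<^sub>R w)" by (rule Qge)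
    also have "\<dots> = 2 * t * (w \<bullet> w) + t^2 * Q w" using expand Qv by simp
    also have "\<dots> = t * (w \<bullet> w) * (2 - Q w / (Q w + 1))" proof -
      have "t * Q w = -(w \<bullet> w) * (Q w / (Q w + 1))" unfolding t_def by simp
      then have "t^2 * Q w = t * (-(w \<bullet> w) * (Q w / (Q w + 1)))" by (simp add: power2_eq_square mult.assoc)
      then show ?thesis by (simp add: algebra_simps)
    qed
    finally have "0 \<le> t * (w \<bullet> w) * (2 - Q w / (Q w + 1))" .
    moreover have "t < 0" unfolding t_def using wp q1 by (simp add: divide_pos_pos)
    moreover have "Q w / (Q w + 1) < 2" using q1 Qge[of w] by (simp add: field_simps)
    ultimately show False using wp by (simp add: mult_less_0_iff zero_le_mult_iff)
  qed
  then have "E *v v = \<mu> *\<^sub>R v" unfolding w_def by simp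
  moreover have "v \<noteq> 0" using nv by auto
  moreover have "\<forall>x. \<mu> * (x \<bullet> x) \<le> x \<bullet> (E *v x)" using Qge by (simp add: Q_def)
  ultimately show ?thesis by blast
qed


lemma eig_finite: fixes E :: "real^'m^'m" assumes "sym_mat E"
  shows "finite {l. \<exists>v. v \<noteq> 0 \<and> E *v v = l *\<^sub>R v}" (is "finite ?S")
proof -
  define f where "f l = (SOME v. v \<noteq> 0 \<and> E *v v = l *\<^sub>R v)" for l
  have f: "f l \<noteq> 0 \<and> E *v f l = l *\<^sub>R f l" if "l \<in> ?S" for l
  proof -
    from that obtain v where "v \<noteq> 0 \<and> E *v v = l *\<^sub>R v" by blast
    then show ?thesis unfolding f_def by (rule someI)
  qed
  have inj: "inj_on f ?S"
  proof (rule inj_onI)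
    fix l l' assume a: "l \<in> ?S" "l' \<in> ?S" "f l = f l'"
    then have "l *\<^sub>R f l = l' *\<^sub>R f l" using f[OF a(1)] f[OF a(2)] by metis
    then show "l = l'" using f[OF a(1)] by (simp add: scaleR_cancel_right)
  qed
  have orth: "pairwise orthogonal (f ` ?S)"
    unfolding pairwise_def
  proof (intro ballI impI)
    fix x y assume "x \<in> f ` ?S" "y \<in> f ` ?S" "x \<noteq> y"
    then obtain l l' where ll: "l \<in> ?S" "l' \<in> ?S" "x = f l" "y = f l'" "l \<noteq> l'" by blast
    have "l * (x \<bullet> y) = (E *v x) \<bullet> y" using f[OF ll(1)] ll by simp
    also have "\<dots> = x \<bullet> (E *v y)" by (rule sym_adj[OF assms])
    also have "\<dots> = l' * (x \<bullet> y)" using f[OF ll(2)] ll by simp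
    finally have "(l - l') * (x \<bullet> y) = 0" by (simp add: algebra_simps)
    then show "orthogonal x y" using ll(5) by (simp add: orthogonal_def)
  qed
  have "0 \<notin> f ` ?S"
  proof
    assume "0 \<in> f ` ?S"
    then obtain l where "l \<in> ?S" "0 = f l" by (rule imageE)
    then show False using f[of l] by simp
  qed
  then have "independent (f ` ?S)" by (rule pairwise_orthogonal_independent[OF orth])
  then have "finite (f ` ?S)" by (rule independent_imp_finite)
  then show ?thesis by (rule finite_imageD[OF _ inj])
qed

lemma lambda_min_prop: fixes E :: "real^'m^'m" assumes "sym_mat E"
  shows "lambda_min E * (x \<bullet> x) \<le> x \<bullet> (E *v x)"
    and "\<exists>v. v \<noteq> 0 \<and> E *v v = lambda_min E *\<^sub>R v"
proof -
  obtain \<mu> v where v: "v \<noteq> 0" "E *v v = \<mu> *\<^sub>R v" and mu: "\<And>x. \<mu> * (x \<bullet> x) \<le> x \<bullet> (E *v x)"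
    using rayleigh[OF assms] by blast
  let ?S = "{l. \<exists>v. v \<noteq> 0 \<and> E *v v = l *\<^sub>R v}"
  have inS: "\<mu> \<in> ?S" unfolding mem_Collect_eq using v by blast
  have lower: "\<mu> \<le> l" if "l \<in> ?S" for l
  proof -
    from that have "\<exists>u. u \<noteq> 0 \<and> E *v u = l *\<^sub>R u" by (simp only: mem_Collect_eq)
    then obtain u where u: "u \<noteq> 0" "E *v u = l *\<^sub>R u" by blast
    have "u \<bullet> (E *v u) = l * (u \<bullet> u)" unfolding u(2) by (rule inner_scaleR_right)
    then have "\<mu> * (u \<bullet> u) \<le> l * (u \<bullet> u)" using mu[of u] by linarith
    moreover have "0 < u \<bullet> u" using u(1) by simp
    ultimately show ?thesis by (rule mult_right_le_imp_le)
  qed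
  have "lambda_min E = \<mu>" unfolding lambda_min_def
    by (rule Min_eqI[OF eig_finite[OF assms] lower inS])
  then show "lambda_min E * (x \<bullet> x) \<le> x \<bullet> (E *v x)" using mu by simp
  show "\<exists>v. v \<noteq> 0 \<and> E *v v = lambda_min E *\<^sub>R v"
    using \<open>lambda_min E = \<mu>\<close> v by blast
qed

lemma lambda_min_pos: assumes "pd_mat E" shows "lambda_min E > 0"
proof -
  obtain v where v: "v \<noteq> 0" "E *v v = lambda_min E *\<^sub>R v"
  proof -
    have "sym_mat E" using assms by (simp add: pd_mat_def)
    then show ?thesis using lambda_min_prop(2) that by blast
  qed
  have "0 < v \<bullet> (E *v v)" using assms v(1) unfolding pd_mat_def by simp
  then have p: "0 < lambda_min E * (v \<bullet> v)" using v(2) by simp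
  have "v \<bullet> v > 0" using v by simp
  moreover have "0 < lambda_min E \<or> (lambda_min E < 0 \<and> v \<bullet> v < 0)" using p by (auto simp: zero_less_mult_iff)
  ultimately show ?thesis by linarith
qed

lemma coercive: fixes G :: "real^'m^'m"
  assumes "c > 0" "\<And>x. c * (x \<bullet> x) \<le> x \<bullet> (G *v x)"
  shows "norm x \<le> norm (G *v x) / c"
proof -
  have "c * (norm x * norm x) \<le> norm x * norm (G *v x)"
  proof -
    have e: "x \<bullet> x = norm x * norm x" by (metis power2_eq_square power2_norm_eq_inner)
    have "x \<bullet> (G *v x) \<le> norm x * norm (G *v x)" by (rule norm_cauchy_schwarz)
    then show ?thesis using assms(2)[of x] unfolding e by linarith
  qed
  then have "c * norm x \<le> norm (G *v x)"
  proof (cases "norm x = 0")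
    case True then show ?thesis by simp
  next
    case False
    then have "norm x > 0" by simp
    moreover have "norm x * (c * norm x) \<le> norm x * norm (G *v x)" using \<open>c * (norm x * norm x) \<le> _\<close> by (simp add: mult.left_commute)
    ultimately show ?thesis by (simp add: mult_le_cancel_left_pos)
  qed
  then show ?thesis using assms(1) by (simp add: field_simps)
qed

lemma inv_right: fixes G :: "real^'m^'m"
  assumes "\<And>x. x \<noteq> 0 \<Longrightarrow> 0 < x \<bullet> (G *v x)"
  shows "G *v (matrix_inv G *v y) = y"
proof -
  have "\<forall>x. G *v x = 0 \<longrightarrow> x = 0"
  proof (intro allI impI)
    fix x assume "G *v x = 0"
    then have "\<not> 0 < x \<bullet> (G *v x)" by simp
    then show "x = 0" using assms by blast
  qed
  then have "\<exists>B. B ** G = mat 1" using matrix_left_invertible_ker by blast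
  then have "invertible G" using invertible_left_inverse by blast
  then have "G ** matrix_inv G = mat 1" unfolding invertible_def matrix_inv_def by (rule someI_ex[THEN conjunct1])
  then show ?thesis by (metis matrix_vector_mul_assoc matrix_vector_mul_lid)
qed


lemma Gapp: "Gmat \<gamma> B E P *v x = E *v x + \<gamma> *\<^sub>R (transpose B *v (P *v (B *v x)))"
  unfolding Gmat_def
proof -
  have "(transpose B ** P ** B) *v x = transpose B *v (P *v (B *v x))"
    by (simp only: matrix_vector_mul_assoc matrix_mul_assoc)
  then show "(E + \<gamma> *\<^sub>R (transpose B ** P ** B)) *v x = E *v x + \<gamma> *\<^sub>R (transpose B *v (P *v (B *v x)))"
    by (simp only: matrix_vector_mult_add_rdistrib scaleR_matrix_vector_assoc[symmetric])
qed

lemma Gquad: fixes B :: "real^'m^'n"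
  shows "x \<bullet> (Gmat \<gamma> B E P *v x) = x \<bullet> (E *v x) + \<gamma> * ((B *v x) \<bullet> (P *v (B *v x)))"
proof -
  have e: "x \<bullet> (transpose B *v (P *v (B *v x))) = (B *v x) \<bullet> (P *v (B *v x))"
    using adj[of B "P *v (B *v x)" x] by (metis inner_commute)
  show ?thesis by (simp only: Gapp inner_add_right inner_scaleR_right e)
qed

lemma pd_pos: assumes "pd_mat P" "y \<noteq> 0" shows "0 < y \<bullet> (P *v y)"
  using assms unfolding pd_mat_def by simp

lemma pd_sym: assumes "pd_mat P" shows "sym_mat P"
  using assms unfolding pd_mat_def by simp

lemma pd_nonneg: assumes "pd_mat P" shows "0 \<le> y \<bullet> (P *v y)"
proof (cases "y = 0")
  case True then show ?thesis by simp
next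
  case False then show ?thesis using pd_pos[OF assms] less_imp_le by blast
qed

lemma Gpd: fixes B :: "real^'m^'n"
  assumes "pd_mat E" "pd_mat P" "0 \<le> \<gamma>" "x \<noteq> 0"
  shows "0 < x \<bullet> (Gmat \<gamma> B E P *v x)"
proof -
  have "0 \<le> (B *v x) \<bullet> (P *v (B *v x))" by (rule pd_nonneg[OF assms(2)])
  moreover have "0 < x \<bullet> (E *v x)" by (rule pd_pos[OF assms(1,4)])
  ultimately show ?thesis unfolding Gquad using assms(3) by (simp add: add_pos_nonneg)
qed

lemma Gsolve: fixes B :: "real^'m^'n"
  assumes "pd_mat E" "pd_mat P" "0 \<le> \<gamma>"
  shows "Gmat \<gamma> B E P *v offset_k \<gamma> B E P h = - (\<gamma> / 2) *\<^sub>R (transpose B *v h)"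
proof -
  have i: "Gmat \<gamma> B E P *v (matrix_inv (Gmat \<gamma> B E P) *v y) = y" for y
    by (rule inv_right) (rule Gpd[OF assms])
  show ?thesis unfolding offset_k_def matrix_vector_mult_scaleR i ..
qed

theorem theorem2:
  fixes A :: "real^'n^'n" and B :: "real^'m^'n" and \<gamma> :: real
    and Ds Dd Ps Pd :: "real^'n^'n" and Es Ed :: "real^'m^'m"
    and ds dd hs hd :: "real^'n"
  assumes "0 \<le> \<gamma>" "\<gamma> \<le> 1"
    and "psd_mat Ds" "psd_mat Dd" "pd_mat Es" "pd_mat Ed"
    and "pd_mat Ps" "riccati \<gamma> A B Ds Es Ps"
    and "pd_mat Pd" "riccati \<gamma> A B Dd Ed Pd"
    and "h_eq \<gamma> A B (gainK \<gamma> A B Es Ps) ds hs"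
    and "h_eq \<gamma> A B (gainK \<gamma> A B Ed Pd) dd hd"
    and "spec_norm (Ed - Es) \<le> lambda_min Es / 2"
  shows "norm (offset_k \<gamma> B Ed Pd hd - offset_k \<gamma> B Es Ps hs)
    \<le> (4 / lambda_min Es) * norm (offset_k \<gamma> B Es Ps hs) * spec_norm (Ed - Es)
     + (4 * \<gamma> / lambda_min Es) * norm (offset_k \<gamma> B Es Ps hs) * (spec_norm B)\<^sup>2 * spec_norm (Pd - Ps)
     + (4 * \<gamma> / lambda_min Es) * spec_norm B * norm (hd - hs)"
proof -
  define L where "L = lambda_min Es"
  define ks where "ks = offset_k \<gamma> B Es Ps hs"
  define kd where "kd = offset_k \<gamma> B Ed Pd hd"
  define Gd where "Gd = Gmat \<gamma> B Ed Pd"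
  define eE where "eE = spec_norm (Ed - Es)"
  define eP where "eP = spec_norm (Pd - Ps)"
  define nB where "nB = spec_norm B"
  have Lpos: "L > 0" unfolding L_def by (rule lambda_min_pos) fact
  have symEs: "sym_mat Es" by (rule pd_sym[OF assms(5)])
  have eE0: "0 \<le> eE" "0 \<le> eP" "0 \<le> nB" unfolding eE_def eP_def nB_def by (rule spec_nonneg)+
  have eEL: "eE \<le> L / 2" using assms(13) unfolding eE_def L_def .
  have coer: "(L/2) * (x \<bullet> x) \<le> x \<bullet> (Gd *v x)" for x
  proof -
    have "0 \<le> (B *v x) \<bullet> (Pd *v (B *v x))" by (rule pd_nonneg[OF assms(9)])
    then have g: "x \<bullet> (Ed *v x) \<le> x \<bullet> (Gd *v x)" unfolding Gd_def Gquad using assms(1) by simp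
    have "\<bar>x \<bullet> ((Ed - Es) *v x)\<bar> \<le> norm x * norm ((Ed - Es) *v x)" by (rule Cauchy_Schwarz_ineq2)
    also have "\<dots> \<le> norm x * (eE * norm x)" unfolding eE_def by (simp add: mult_left_mono spec_bound)
    also have "\<dots> = eE * (x \<bullet> x)" by (simp add: dot_square_norm power2_eq_square)
    finally have a: "\<bar>x \<bullet> ((Ed - Es) *v x)\<bar> \<le> eE * (x \<bullet> x)" .
    have b: "L * (x \<bullet> x) \<le> x \<bullet> (Es *v x)" unfolding L_def by (rule lambda_min_prop(1)[OF symEs])
    have c: "x \<bullet> (Ed *v x) = x \<bullet> (Es *v x) + x \<bullet> ((Ed - Es) *v x)"
      by (simp add: matrix_vector_mult_diff_rdistrib inner_diff_right)
    have "eE * (x \<bullet> x) \<le> (L/2) * (x \<bullet> x)" by (rule mult_right_mono[OF _ inner_ge_zero]) (use eEL in simp)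
    then show ?thesis using a b c g by linarith
  qed
  have bnd: "norm x \<le> norm (Gd *v x) / (L/2)" for x
    by (rule coercive) (use Lpos coer in auto)
  have sd: "Gd *v kd = - (\<gamma> / 2) *\<^sub>R (transpose B *v hd)"
    unfolding Gd_def kd_def by (rule Gsolve[OF assms(6) assms(9) assms(1)])
  have ss: "Gmat \<gamma> B Es Ps *v ks = - (\<gamma> / 2) *\<^sub>R (transpose B *v hs)"
    unfolding ks_def by (rule Gsolve[OF assms(5) assms(7) assms(1)])
  define D where "D = (Ed - Es) *v ks + \<gamma> *\<^sub>R (transpose B *v ((Pd - Ps) *v (B *v ks)))"
  have diff: "Gd *v ks = Gmat \<gamma> B Es Ps *v ks + D"
    unfolding Gd_def Gapp D_def
    by (simp only: matrix_vector_mult_diff_rdistrib matrix_vector_mult_diff_distrib scaleR_diff_right) simp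
  have eq: "Gd *v (kd - ks) = - ((\<gamma> / 2) *\<^sub>R (transpose B *v (hd - hs)) + D)"
  proof -
    have "Gd *v (kd - ks) = Gd *v kd - Gd *v ks" by (rule matrix_vector_mult_diff_distrib)
    also have "\<dots> = - (\<gamma> / 2) *\<^sub>R (transpose B *v hd) - (- (\<gamma> / 2) *\<^sub>R (transpose B *v hs) + D)"
      unfolding diff sd ss ..
    also have "\<dots> = - ((\<gamma> / 2) *\<^sub>R (transpose B *v hd - transpose B *v hs) + D)"
      by (simp only: scaleR_diff_right scaleR_minus_left) simp
    finally show ?thesis by (simp only: matrix_vector_mult_diff_distrib)
  qed
  have n1: "norm ((\<gamma> / 2) *\<^sub>R (transpose B *v (hd - hs))) \<le> (\<gamma>/2) * (nB * norm (hd - hs))"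
    using spec_tbound[of B "hd - hs"] assms(1) unfolding nB_def by (simp add: mult_left_mono)
  have n2: "norm ((Ed - Es) *v ks) \<le> eE * norm ks" unfolding eE_def by (rule spec_bound)
  have "norm (transpose B *v ((Pd - Ps) *v (B *v ks))) \<le> nB * norm ((Pd - Ps) *v (B *v ks))"
    unfolding nB_def by (rule spec_tbound)
  also have "\<dots> \<le> nB * (eP * norm (B *v ks))" using eE0 unfolding eP_def by (simp add: mult_left_mono spec_bound)
  also have "\<dots> \<le> nB * (eP * (nB * norm ks))" using eE0 unfolding nB_def
    by (intro mult_left_mono spec_bound) (auto simp: nB_def)
  finally have n3: "norm (\<gamma> *\<^sub>R (transpose B *v ((Pd - Ps) *v (B *v ks)))) \<le> \<gamma> * (nB * (eP * (nB * norm ks)))"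
    using assms(1) by (simp add: mult_left_mono)
  define X where "X = (\<gamma>/2) * (nB * norm (hd - hs)) + eE * norm ks + \<gamma> * (nB * (eP * (nB * norm ks)))"
  have nD: "norm D \<le> eE * norm ks + \<gamma> * (nB * (eP * (nB * norm ks)))"
    unfolding D_def using norm_triangle_ineq[of "(Ed - Es) *v ks" "\<gamma> *\<^sub>R (transpose B *v ((Pd - Ps) *v (B *v ks)))"] n2 n3
    by linarith
  have "norm (Gd *v (kd - ks)) \<le> X"
    unfolding eq norm_minus_cancel X_def
    using norm_triangle_ineq[of "(\<gamma> / 2) *\<^sub>R (transpose B *v (hd - hs))" D] n1 nD by linarith
  then have "norm (Gd *v (kd - ks)) / (L/2) \<le> X / (L/2)"
    by (rule divide_right_mono) (use Lpos in simp)
  then have main: "norm (kd - ks) \<le> X / (L/2)"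
    using bnd[of "kd - ks"] by linarith
  have t0: "0 \<le> \<gamma> * nB * norm (hd - hs)" "0 \<le> eE * norm ks" "0 \<le> \<gamma> * nB^2 * eP * norm ks"
    using eE0 assms(1) by auto
  have "X / (L/2)
     = (2/L) * (eE * norm ks) + (2/L) * (\<gamma> * nB^2 * eP * norm ks) + (1/L) * (\<gamma> * nB * norm (hd - hs))"
    unfolding X_def using Lpos by (simp add: field_simps power2_eq_square)
  also have "\<dots> \<le> (4/L) * (eE * norm ks) + (4/L) * (\<gamma> * nB^2 * eP * norm ks) + (4/L) * (\<gamma> * nB * norm (hd - hs))"
    using t0 Lpos by (intro add_mono mult_right_mono) (auto simp: divide_right_mono)
  also have "\<dots> = (4 / L) * norm ks * eE + (4 * \<gamma> / L) * norm ks * nB^2 * eP + (4 * \<gamma> / L) * nB * norm (hd - hs)"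
    by (simp add: mult_ac)
  finally have fin: "norm (kd - ks) \<le> (4 / L) * norm ks * eE + (4 * \<gamma> / L) * norm ks * nB^2 * eP + (4 * \<gamma> / L) * nB * norm (hd - hs)"
    using main by linarith
  then show ?thesis unfolding ks_def kd_def L_def eE_def eP_def nB_def .
qed

end
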